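(* For any $\delta>0$ there exists $c=c(\delta)>0$ such that the following holds. For any $\varepsilon\in(0,c)$, any simple graph $G=(V,E)$ on $n\ge\varepsilon^{-2}$ vertices with minimal degree at least $\delta n$, any $U\subset V$ with $|U|\ge\varepsilon\sqrt n$ and any vertex $v$ of $G$, \[ \Pr_v\left(X\left[0,2\left(t^G_{\mathrm{mix}}(\varepsilon/2)+\lfloor\sqrt n\rfloor\right)\right]\cap U=\varnothing\right)\le 1-\frac{\varepsilon\delta}{4}, \] where $X$ is the (non-lazy) simple random walk on $G$ started at $v$.
   Context: $t^G_{\mathrm{mix}}(\varepsilon)=\max_v\min\{t\ge0:\|\mathbf p^t(v,\cdot)-\pi\|_{\mathrm{TV}}<\varepsilon\}$ is defined for the lazy random walk on $G$ (stay put with probability $1/2$, otherwise move to a uniform neighbour), with $\pi(v)=\deg(v)/2|E|$ and total variation distance $\frac12\sum_v|\mu(v)-\nu(v)|$. For $a,b\ge0$, $X[a,b]$ denotes the set $\{X_i: i\in[\lceil a\rceil,\lfloor b\rfloor]\cap\mathbb N\}$.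
   Formalization: From every vertex of G the lazy random walk comes strictly within total variation distance $\varepsilon/2$ of $\pi$ at some time, so $t^G_{\mathrm{mix}}(\varepsilon/2)$ is assumed finite. The statement above fails without it. *)

theory Defs
  imports Complex_Main
begin

definition simple_graph :: "'a set \<Rightarrow> ('a \<Rightarrow> 'a \<Rightarrow> bool) \<Rightarrow> bool" where
  "simple_graph V E \<longleftrightarrow> finite V \<and> (\<forall>u w. E u w \<longrightarrow> u \<in> V \<and> w \<in> V) \<and>
     (\<forall>u w. E u w \<longrightarrow> E w u) \<and> (\<forall>u. \<not> E u u)"

definition deg :: "'a set \<Rightarrow> ('a \<Rightarrow> 'a \<Rightarrow> bool) \<Rightarrow> 'a \<Rightarrow> nat" where
  "deg V E u = card {w \<in> V. E u w}"

definition lazy_P :: "'a set \<Rightarrow> ('a \<Rightarrow> 'a \<Rightarrow> bool) \<Rightarrow> 'a \<Rightarrow> 'a \<Rightarrow> real" where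
  "lazy_P V E u w = (if u = w then 1/2 else 0)
      + (if E u w then 1 / (2 * real (deg V E u)) else 0)"

fun lazy_pt :: "'a set \<Rightarrow> ('a \<Rightarrow> 'a \<Rightarrow> bool) \<Rightarrow> nat \<Rightarrow> 'a \<Rightarrow> 'a \<Rightarrow> real" where
  "lazy_pt V E 0 v w = (if v = w then 1 else 0)"
| "lazy_pt V E (Suc t) v w = (\<Sum>u\<in>V. lazy_pt V E t v u * lazy_P V E u w)"

text \<open>Stationary distribution pi(w) = deg(w) / 2|E|  (2|E| = sum of degrees).\<close>
definition stat_dist :: "'a set \<Rightarrow> ('a \<Rightarrow> 'a \<Rightarrow> bool) \<Rightarrow> 'a \<Rightarrow> real" where
  "stat_dist V E w = real (deg V E w) / real (\<Sum>u\<in>V. deg V E u)"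

definition tv_dist :: "'a set \<Rightarrow> ('a \<Rightarrow> real) \<Rightarrow> ('a \<Rightarrow> real) \<Rightarrow> real" where
  "tv_dist V \<mu> \<nu> = (1/2) * (\<Sum>w\<in>V. \<bar>\<mu> w - \<nu> w\<bar>)"

text \<open>Mixing time t_mix(eps) = max_v min { t : TV(p^t(v,.), pi) < eps }.
  Meaningful when for every v such t exists (this is assumed in the theorem).\<close>
definition t_mix :: "'a set \<Rightarrow> ('a \<Rightarrow> 'a \<Rightarrow> bool) \<Rightarrow> real \<Rightarrow> nat" where
  "t_mix V E eps = Max ((\<lambda>v. LEAST t. tv_dist V (lazy_pt V E t v) (stat_dist V E) < eps) ` V)"

text \<open>Probability that the (non-lazy) simple random walk started at v has
  X_0, ..., X_k all outside U:  computed by first-step decomposition.\<close>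
fun srw_avoid :: "'a set \<Rightarrow> ('a \<Rightarrow> 'a \<Rightarrow> bool) \<Rightarrow> 'a set \<Rightarrow> nat \<Rightarrow> 'a \<Rightarrow> real" where
  "srw_avoid V E U 0 v = (if v \<in> U then 0 else 1)"
| "srw_avoid V E U (Suc k) v = (if v \<in> U then 0 else
      (\<Sum>w\<in>{w\<in>V. E v w}. srw_avoid V E U k w) / real (deg V E v))"

end

theory Submission
  imports Defs
begin

locale rw =
  fixes V :: "'a set" and E :: "'a \<Rightarrow> 'a \<Rightarrow> bool" and U :: "'a set" and d :: real
  assumes sg: "simple_graph V E" and UV: "U \<subseteq> V" and dpos: "d > 0"
    and dle: "\<And>u. u \<in> V \<Longrightarrow> d \<le> real (deg V E u)"
begin

lemma finV: "finite V" using sg by (simp add: simple_graph_def)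
lemma finU: "finite U" using UV finV finite_subset by blast
lemma Ein: "E u w \<Longrightarrow> u \<in> V \<and> w \<in> V" using sg by (simp add: simple_graph_def)
lemma Esym: "E u w \<Longrightarrow> E w u" using sg by (simp add: simple_graph_def)
lemma degpos: "u \<in> V \<Longrightarrow> real (deg V E u) > 0" using dle dpos by (meson less_le_trans)

lemma P_nonneg: "lazy_P V E u w \<ge> 0" by (simp add: lazy_P_def)

lemma sum_E: "(\<Sum>w\<in>V. if E u w then c else 0) = c * real (deg V E u)"
proof -
  have "(\<Sum>w\<in>V. if E u w then c else 0) = (\<Sum>w\<in>{w\<in>V. E u w}. c)"
    using sum.inter_filter[OF finV, of "\<lambda>_. c" "E u"] by simp
  then show ?thesis by (simp add: deg_def mult.commute)
qed

lemma sum_delta1: "finite A \<Longrightarrow> x \<in> A \<Longrightarrow> (\<Sum>u\<in>A. (if x = u then 1 else 0) * (f u::real)) = f x"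
proof -
  assume "finite A" "x \<in> A"
  have "(\<Sum>u\<in>A. (if x = u then 1 else 0) * f u) = (\<Sum>u\<in>A. if x = u then f u else 0)" by (rule sum.cong) auto
  then show ?thesis using \<open>finite A\<close> \<open>x \<in> A\<close> by simp
qed

lemma sum_delta2: "finite A \<Longrightarrow> x \<in> A \<Longrightarrow> (\<Sum>u\<in>A. (f u::real) * (if u = x then 1 else 0)) = f x"
proof -
  assume "finite A" "x \<in> A"
  have "(\<Sum>u\<in>A. f u * (if u = x then 1 else 0)) = (\<Sum>u\<in>A. if u = x then f u else 0)" by (rule sum.cong) auto
  then show ?thesis using \<open>finite A\<close> \<open>x \<in> A\<close> by (simp add: sum.delta')
qed

lemma P_sum: "u \<in> V \<Longrightarrow> (\<Sum>w\<in>V. lazy_P V E u w) = 1"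
proof -
  assume u: "u \<in> V"
  have "(\<Sum>w\<in>V. lazy_P V E u w) = (\<Sum>w\<in>V. if u = w then 1/2 else 0)
      + (\<Sum>w\<in>V. if E u w then 1 / (2 * real (deg V E u)) else 0)"
    unfolding lazy_P_def by (simp add: sum.distrib)
  also have "\<dots> = 1/2 + 1/2" using u finV degpos[OF u] by (simp add: sum_E)
  finally show ?thesis by simp
qed

lemma P_out: "x \<in> V \<Longrightarrow> w \<notin> V \<Longrightarrow> lazy_P V E x w = 0"
  using Ein by (auto simp: lazy_P_def)

lemma pt_nonneg: "lazy_pt V E t x w \<ge> 0"
  by (induction t arbitrary: w) (auto intro!: sum_nonneg mult_nonneg_nonneg P_nonneg)

lemma pt_sum: "x \<in> V \<Longrightarrow> (\<Sum>w\<in>V. lazy_pt V E t x w) = 1"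
proof (induction t)
  case 0 then show ?case using finV by simp
next
  case (Suc t)
  have "(\<Sum>w\<in>V. lazy_pt V E (Suc t) x w) = (\<Sum>w\<in>V. \<Sum>u\<in>V. lazy_pt V E t x u * lazy_P V E u w)"
    by simp
  also have "\<dots> = (\<Sum>u\<in>V. \<Sum>w\<in>V. lazy_pt V E t x u * lazy_P V E u w)" by (rule sum.swap)
  also have "\<dots> = (\<Sum>u\<in>V. lazy_pt V E t x u * (\<Sum>w\<in>V. lazy_P V E u w))"
    by (simp add: sum_distrib_left)
  also have "\<dots> = (\<Sum>u\<in>V. lazy_pt V E t x u)" by (simp add: P_sum)
  finally show ?case using Suc by simp
qed

lemma pt_left: "x \<in> V \<Longrightarrow> lazy_pt V E (Suc t) x w = (\<Sum>y\<in>V. lazy_P V E x y * lazy_pt V E t y w)"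
proof (induction t arbitrary: w)
  case 0
  show ?case
  proof (cases "w \<in> V")
    case True then show ?thesis using 0 finV by (simp add: sum_delta1 sum_delta2)
  next
    case False
    have "(\<Sum>y\<in>V. lazy_P V E x y * lazy_pt V E 0 y w) = 0"
      by (rule sum.neutral) (use False in auto)
    then show ?thesis using 0 False P_out by simp
  qed
next
  case (Suc t)
  have "lazy_pt V E (Suc (Suc t)) x w = (\<Sum>u\<in>V. (\<Sum>y\<in>V. lazy_P V E x y * lazy_pt V E t y u) * lazy_P V E u w)"
    using Suc by simp
  also have "\<dots> = (\<Sum>u\<in>V. \<Sum>y\<in>V. lazy_P V E x y * (lazy_pt V E t y u * lazy_P V E u w))"
    by (simp add: sum_distrib_right mult.assoc)
  also have "\<dots> = (\<Sum>y\<in>V. \<Sum>u\<in>V. lazy_P V E x y * (lazy_pt V E t y u * lazy_P V E u w))"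
    by (rule sum.swap)
  also have "\<dots> = (\<Sum>y\<in>V. lazy_P V E x y * (\<Sum>u\<in>V. lazy_pt V E t y u * lazy_P V E u w))"
    by (simp add: sum_distrib_left)
  finally show ?case by simp
qed

lemma pt_bound: "x \<in> V \<Longrightarrow> w \<in> V \<Longrightarrow> lazy_pt V E t x w \<le> (if x = w then (1/2)^t else 0) + 1/d"
proof (induction t arbitrary: w)
  case 0 then show ?case using dpos by simp
next
  case (Suc t)
  have "lazy_pt V E (Suc t) x w = (\<Sum>u\<in>V. lazy_pt V E t x u * (if u = w then 1/2 else 0))
     + (\<Sum>u\<in>V. lazy_pt V E t x u * (if E u w then 1 / (2 * real (deg V E u)) else 0))"
    by (simp add: lazy_P_def distrib_left sum.distrib)
  also have "(\<Sum>u\<in>V. lazy_pt V E t x u * (if u = w then 1/2 else 0)) = lazy_pt V E t x w / 2"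
    using Suc.prems finV by (simp add: if_distrib cong: if_cong)
  also have "(\<Sum>u\<in>V. lazy_pt V E t x u * (if E u w then 1 / (2 * real (deg V E u)) else 0))
      \<le> (\<Sum>u\<in>V. lazy_pt V E t x u * (1 / (2 * d)))"
  proof (rule sum_mono)
    fix u assume u: "u \<in> V"
    have "(if E u w then 1 / (2 * real (deg V E u)) else 0) \<le> 1 / (2 * d)"
      using dle[OF u] dpos by (auto simp: frac_le)
    then show "lazy_pt V E t x u * (if E u w then 1 / (2 * real (deg V E u)) else 0)
      \<le> lazy_pt V E t x u * (1 / (2 * d))" by (rule mult_left_mono) (rule pt_nonneg)
  qed
  also have "(\<Sum>u\<in>V. lazy_pt V E t x u * (1 / (2 * d))) = (\<Sum>u\<in>V. lazy_pt V E t x u) * (1 / (2 * d))"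
    by (rule sum_distrib_right[symmetric])
  also have "\<dots> = 1 / (2 * d)" using pt_sum[OF Suc.prems(1)] by simp
  finally have "lazy_pt V E (Suc t) x w \<le> lazy_pt V E t x w / 2 + 1 / (2 * d)" by simp
  also have "\<dots> \<le> ((if x = w then (1/2)^t else 0) + 1/d) / 2 + 1 / (2 * d)"
    using Suc by simp
  also have "\<dots> = (if x = w then (1/2)^(Suc t) else 0) + 1/d"
    by (cases "x = w") (simp_all add: field_simps)
  finally show ?case .
qed

end


lemma tv_lemma:
  fixes \<mu> \<nu> f :: "'a \<Rightarrow> real"
  assumes "finite A" "sum \<mu> A = 1" "sum \<nu> A = 1" "\<And>x. x \<in> A \<Longrightarrow> 0 \<le> f x \<and> f x \<le> M"
  shows "(\<Sum>x\<in>A. \<nu> x * f x) - (\<Sum>x\<in>A. \<mu> x * f x) \<le> M * tv_dist A \<mu> \<nu>"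
proof -
  have z: "(\<Sum>x\<in>A. (\<nu> x - \<mu> x) * (M/2)) = 0"
    using assms(2,3) by (simp only: sum_distrib_right[symmetric] sum_subtractf) simp
  have "(\<Sum>x\<in>A. \<nu> x * f x) - (\<Sum>x\<in>A. \<mu> x * f x) = (\<Sum>x\<in>A. (\<nu> x - \<mu> x) * f x)"
    by (simp add: sum_subtractf left_diff_distrib)
  also have "\<dots> = (\<Sum>x\<in>A. (\<nu> x - \<mu> x) * (f x - M/2))"
    using z by (simp add: right_diff_distrib sum_subtractf)
  also have "\<dots> \<le> (\<Sum>x\<in>A. \<bar>\<mu> x - \<nu> x\<bar> * (M/2))"
  proof (rule sum_mono)
    fix x assume x: "x \<in> A"
    have "(\<nu> x - \<mu> x) * (f x - M/2) \<le> \<bar>(\<nu> x - \<mu> x) * (f x - M/2)\<bar>" by (rule abs_ge_self)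
    also have "\<dots> = \<bar>\<mu> x - \<nu> x\<bar> * \<bar>f x - M/2\<bar>" by (simp add: abs_mult abs_minus_commute)
    also have "\<dots> \<le> \<bar>\<mu> x - \<nu> x\<bar> * (M/2)"
    proof -
      have "\<bar>f x - M/2\<bar> \<le> M/2" using assms(4)[OF x] by (auto simp: abs_if)
      then show ?thesis by (rule mult_left_mono) simp
    qed
    finally show "(\<nu> x - \<mu> x) * (f x - M/2) \<le> \<bar>\<mu> x - \<nu> x\<bar> * (M/2)" .
  qed
  also have "\<dots> = (\<Sum>x\<in>A. \<bar>\<mu> x - \<nu> x\<bar>) * (M/2)" by (rule sum_distrib_right[symmetric])
  also have "\<dots> = M * tv_dist A \<mu> \<nu>" by (simp add: tv_dist_def)
  finally show ?thesis .
qed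

lemma geom_sum: "(\<Sum>j\<le>m. (1/2::real)^j) = 2 - (1/2)^m"
  by (induction m) auto

lemma pow2_ge: "real s + 1 \<le> 2 ^ s"
  by (induction s) auto

context rw begin

lemma S_pos: "V \<noteq> {} \<Longrightarrow> real (\<Sum>u\<in>V. deg V E u) > 0"
proof -
  assume "V \<noteq> {}"
  then obtain u where u: "u \<in> V" by auto
  have "deg V E u \<le> (\<Sum>u\<in>V. deg V E u)" using finV u by (simp add: member_le_sum)
  then show ?thesis using degpos[OF u] by linarith
qed

lemma pi_nonneg: "stat_dist V E x \<ge> 0" by (auto simp: stat_dist_def intro!: divide_nonneg_nonneg sum_nonneg)

lemma Eirr: "\<not> E u u" using sg by (simp add: simple_graph_def)

lemma pi_sum: "V \<noteq> {} \<Longrightarrow> (\<Sum>x\<in>V. stat_dist V E x) = 1"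
  using S_pos by (simp add: stat_dist_def sum_divide_distrib[symmetric])

lemma card_in: "card {x\<in>V. E x u} = deg V E u"
  unfolding deg_def by (rule arg_cong[where f=card]) (auto dest: Esym)

lemma pi_P: "u \<in> V \<Longrightarrow> (\<Sum>x\<in>V. stat_dist V E x * lazy_P V E x u) = stat_dist V E u"
proof -
  assume u: "u \<in> V"
  let ?S = "real (\<Sum>u\<in>V. deg V E u)"
  have "(\<Sum>x\<in>V. stat_dist V E x * lazy_P V E x u)
      = (\<Sum>x\<in>V. if x = u then stat_dist V E x / 2 else 0) + (\<Sum>x\<in>V. if E x u then 1 / (2 * ?S) else 0)"
    unfolding sum.distrib[symmetric]
  proof (rule sum.cong)
    fix x assume x: "x \<in> V"
    show "stat_dist V E x * lazy_P V E x u = (if x = u then stat_dist V E x / 2 else 0) + (if E x u then 1 / (2 * ?S) else 0)"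
      using degpos[OF x] Eirr by (auto simp: stat_dist_def lazy_P_def field_simps dest: Ein)
  qed simp
  also have "(\<Sum>x\<in>V. if E x u then 1 / (2 * ?S) else 0) = (\<Sum>x\<in>{x\<in>V. E x u}. 1 / (2 * ?S))"
    using sum.inter_filter[OF finV, of "\<lambda>_. 1 / (2 * ?S)" "\<lambda>x. E x u"] by simp
  also have "\<dots> = real (deg V E u) / (2 * ?S)" by (simp add: card_in)
  finally show ?thesis using u finV by (simp add: stat_dist_def)
qed

lemma pi_pt: "u \<in> V \<Longrightarrow> (\<Sum>x\<in>V. stat_dist V E x * lazy_pt V E t x u) = stat_dist V E u"
proof (induction t arbitrary: u)
  case 0 then show ?case using finV by (simp add: sum_delta2[where f="stat_dist V E"] cong: if_cong)
next
  case (Suc t)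
  have "(\<Sum>x\<in>V. stat_dist V E x * lazy_pt V E (Suc t) x u)
      = (\<Sum>x\<in>V. \<Sum>w\<in>V. stat_dist V E x * lazy_pt V E t x w * lazy_P V E w u)"
    by (simp add: sum_distrib_left mult.assoc)
  also have "\<dots> = (\<Sum>w\<in>V. \<Sum>x\<in>V. stat_dist V E x * lazy_pt V E t x w * lazy_P V E w u)"
    by (rule sum.swap)
  also have "\<dots> = (\<Sum>w\<in>V. (\<Sum>x\<in>V. stat_dist V E x * lazy_pt V E t x w) * lazy_P V E w u)"
    by (simp add: sum_distrib_right)
  also have "\<dots> = (\<Sum>w\<in>V. stat_dist V E w * lazy_P V E w u)" using Suc.IH by simp
  finally show ?case using pi_P[OF Suc.prems] by simp
qed

fun Lz :: "nat \<Rightarrow> 'a \<Rightarrow> real" where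
  "Lz 0 x = (if x \<in> U then 0 else 1)"
| "Lz (Suc t) x = (if x \<in> U then 0 else (\<Sum>y\<in>V. lazy_P V E x y * Lz t y))"

lemma Lz_bounds: "x \<in> V \<Longrightarrow> 0 \<le> Lz t x \<and> Lz t x \<le> 1"
proof (induction t arbitrary: x)
  case 0 then show ?case by simp
next
  case (Suc t)
  have "(\<Sum>y\<in>V. lazy_P V E x y * Lz t y) \<le> (\<Sum>y\<in>V. lazy_P V E x y * 1)"
    by (rule sum_mono, rule mult_left_mono) (use Suc.IH P_nonneg in auto)
  moreover have "(\<Sum>y\<in>V. lazy_P V E x y * Lz t y) \<ge> 0"
    by (rule sum_nonneg, rule mult_nonneg_nonneg) (use Suc.IH P_nonneg in auto)
  ultimately show ?case using P_sum[OF Suc.prems] by simp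
qed

lemma A_bounds: "v \<in> V \<Longrightarrow> 0 \<le> srw_avoid V E U k v \<and> srw_avoid V E U k v \<le> 1"
proof (induction k arbitrary: v)
  case 0 then show ?case by simp
next
  case (Suc k)
  have "(\<Sum>w\<in>{w\<in>V. E v w}. srw_avoid V E U k w) \<le> (\<Sum>w\<in>{w\<in>V. E v w}. 1)"
    by (rule sum_mono) (use Suc.IH in auto)
  moreover have "(\<Sum>w\<in>{w\<in>V. E v w}. srw_avoid V E U k w) \<ge> 0"
    by (rule sum_nonneg) (use Suc.IH in auto)
  ultimately show ?case using degpos[OF Suc.prems] by (simp add: deg_def divide_le_eq)
qed

lemma A_step: "v \<in> V \<Longrightarrow> srw_avoid V E U (Suc k) v \<le> srw_avoid V E U k v"
proof (induction k arbitrary: v)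
  case 0
  have "(\<Sum>w\<in>{w\<in>V. E v w}. srw_avoid V E U 0 w) \<le> (\<Sum>w\<in>{w\<in>V. E v w}. 1)"
    by (rule sum_mono) simp
  then show ?case using degpos[OF 0] by (simp add: deg_def divide_le_eq)
next
  case (Suc k)
  have "(\<Sum>w\<in>{w\<in>V. E v w}. srw_avoid V E U (Suc k) w) \<le> (\<Sum>w\<in>{w\<in>V. E v w}. srw_avoid V E U k w)"
    by (rule sum_mono) (use Suc.IH in auto)
  then show ?case using degpos[OF Suc.prems] by (simp add: divide_right_mono)
qed

lemma A_mono: "v \<in> V \<Longrightarrow> k \<le> K \<Longrightarrow> srw_avoid V E U K v \<le> srw_avoid V E U k v"
  using lift_Suc_antimono_le[of "\<lambda>k. srw_avoid V E U k v"] A_step by blast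

lemma neigh_sum: "x \<in> V \<Longrightarrow> (\<Sum>y\<in>V. lazy_P V E x y * f y) = f x / 2 + (\<Sum>y\<in>{w\<in>V. E x w}. f y) / (2 * real (deg V E x))"
proof -
  assume x: "x \<in> V"
  have "(\<Sum>y\<in>V. lazy_P V E x y * f y) = (\<Sum>y\<in>V. (if x = y then f y / 2 else 0)) + (\<Sum>y\<in>V. if E x y then f y / (2 * real (deg V E x)) else 0)"
    unfolding sum.distrib[symmetric] by (rule sum.cong) (auto simp: lazy_P_def field_simps)
  also have "(\<Sum>y\<in>V. if E x y then f y / (2 * real (deg V E x)) else 0) = (\<Sum>y\<in>{w\<in>V. E x w}. f y / (2 * real (deg V E x)))"
    using sum.inter_filter[OF finV, of "\<lambda>y. f y / (2 * real (deg V E x))" "E x"] by simp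
  finally show ?thesis using x finV by (simp add: sum_divide_distrib)
qed

lemma A_le_Lz: "v \<in> V \<Longrightarrow> srw_avoid V E U t v \<le> Lz t v"
proof (induction t arbitrary: v)
  case 0 then show ?case by simp
next
  case (Suc t)
  show ?case
  proof (cases "v \<in> U")
    case True then show ?thesis by simp
  next
    case False
    let ?D = "2 * real (deg V E v)"
    have dp: "real (deg V E v) > 0" using degpos[OF Suc.prems] .
    have "srw_avoid V E U (Suc t) v = srw_avoid V E U (Suc t) v / 2 + srw_avoid V E U (Suc t) v / 2" by simp
    also have "\<dots> \<le> srw_avoid V E U t v / 2 + (\<Sum>w\<in>{w\<in>V. E v w}. srw_avoid V E U t w) / ?D"
      using A_step[OF Suc.prems, of t] False dp by simp
    also have "\<dots> \<le> Lz t v / 2 + (\<Sum>w\<in>{w\<in>V. E v w}. Lz t w) / ?D"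
    proof -
      have "(\<Sum>w\<in>{w\<in>V. E v w}. srw_avoid V E U t w) \<le> (\<Sum>w\<in>{w\<in>V. E v w}. Lz t w)"
        by (rule sum_mono) (use Suc.IH in auto)
      then show ?thesis using Suc.IH[OF Suc.prems] dp by (intro add_mono divide_right_mono) auto
    qed
    also have "\<dots> = Lz (Suc t) v" using False neigh_sum[OF Suc.prems, of "Lz t"] by simp
    finally show ?thesis .
  qed
qed

lemma Lz_shift: "v \<in> V \<Longrightarrow> Lz (t0 + K) v \<le> (\<Sum>x\<in>V. lazy_pt V E t0 v x * Lz K x)"
proof (induction t0 arbitrary: v)
  case 0 then show ?case using finV by (simp add: sum_delta1)
next
  case (Suc t0)
  have "Lz (Suc t0 + K) v \<le> (\<Sum>y\<in>V. lazy_P V E v y * Lz (t0 + K) y)"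
  proof (cases "v \<in> U")
    case True
    have "0 \<le> (\<Sum>y\<in>V. lazy_P V E v y * Lz (t0 + K) y)"
      by (rule sum_nonneg, rule mult_nonneg_nonneg) (use Lz_bounds P_nonneg in auto)
    then show ?thesis using True by simp
  qed simp
  also have "\<dots> \<le> (\<Sum>y\<in>V. lazy_P V E v y * (\<Sum>x\<in>V. lazy_pt V E t0 y x * Lz K x))"
  proof (rule sum_mono)
    fix y assume y: "y \<in> V"
    show "lazy_P V E v y * Lz (t0 + K) y \<le> lazy_P V E v y * (\<Sum>x\<in>V. lazy_pt V E t0 y x * Lz K x)"
      by (rule mult_left_mono[OF Suc.IH[OF y] P_nonneg])
  qed
  also have "\<dots> = (\<Sum>y\<in>V. \<Sum>x\<in>V. lazy_P V E v y * lazy_pt V E t0 y x * Lz K x)"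
    by (simp add: sum_distrib_left mult.assoc)
  also have "\<dots> = (\<Sum>x\<in>V. \<Sum>y\<in>V. lazy_P V E v y * lazy_pt V E t0 y x * Lz K x)"
    by (rule sum.swap)
  also have "\<dots> = (\<Sum>x\<in>V. (\<Sum>y\<in>V. lazy_P V E v y * lazy_pt V E t0 y x) * Lz K x)"
    by (simp add: sum_distrib_right)
  also have "\<dots> = (\<Sum>x\<in>V. lazy_pt V E (Suc t0) v x * Lz K x)"
    by (rule sum.cong) (simp_all only: pt_left[OF Suc.prems])
  finally show ?case .
qed

end

context rw begin

definition g :: "nat \<Rightarrow> 'a \<Rightarrow> real" where
  "g j x = (\<Sum>u\<in>U. lazy_pt V E j x u)"

definition Nv :: "nat \<Rightarrow> 'a \<Rightarrow> real" where
  "Nv m x = (\<Sum>j\<le>m. g j x)"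

lemma g_nonneg: "g j x \<ge> 0" unfolding g_def by (rule sum_nonneg) (rule pt_nonneg)

lemma g_bound: "x \<in> V \<Longrightarrow> g j x \<le> (1/2)^j + real (card U) / d"
proof -
  assume x: "x \<in> V"
  have "g j x \<le> (\<Sum>u\<in>U. (if x = u then (1/2)^j else 0) + 1/d)"
    unfolding g_def
  proof (rule sum_mono)
    fix u assume "u \<in> U"
    then have "u \<in> V" using UV by auto
    then show "lazy_pt V E j x u \<le> (if x = u then (1/2)^j else 0) + 1/d" by (rule pt_bound[OF x])
  qed
  also have "\<dots> = (if x \<in> U then (1/2)^j else 0) + real (card U) / d"
    using finU by (simp add: sum.distrib)
  also have "\<dots> \<le> (1/2)^j + real (card U) / d" by simp
  finally show ?thesis .
qed

lemma g0: "g 0 x = (if x \<in> U then 1 else 0)"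
  unfolding g_def using finU by simp

lemma g_Suc: "x \<in> V \<Longrightarrow> g (Suc j) x = (\<Sum>y\<in>V. lazy_P V E x y * g j y)"
  unfolding g_def using pt_left
  by (simp add: sum_distrib_left sum.swap[of _ V U])

lemma Nv_rec: "x \<in> V \<Longrightarrow> Nv (Suc m) x = (if x \<in> U then 1 else 0) + (\<Sum>y\<in>V. lazy_P V E x y * Nv m y)"
proof -
  assume x: "x \<in> V"
  have "Nv (Suc m) x = g 0 x + (\<Sum>j\<le>m. g (Suc j) x)"
    unfolding Nv_def by (rule sum.atMost_Suc_shift)
  also have "(\<Sum>j\<le>m. g (Suc j) x) = (\<Sum>y\<in>V. lazy_P V E x y * Nv m y)"
    unfolding Nv_def using g_Suc[OF x] by (simp add: sum_distrib_left sum.swap[of _ V])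
  finally show ?thesis by (simp add: g0)
qed

lemma Nv_bound: "x \<in> V \<Longrightarrow> Nv m x \<le> 2 + (real m + 1) * real (card U) / d"
proof -
  assume x: "x \<in> V"
  have "Nv m x \<le> (\<Sum>j\<le>m. (1/2)^j + real (card U) / d)"
    unfolding Nv_def by (rule sum_mono) (rule g_bound[OF x])
  also have "\<dots> = (2 - (1/2)^m) + (real m + 1) * (real (card U) / d)"
    by (simp add: sum.distrib geom_sum)
  also have "\<dots> \<le> 2 + (real m + 1) * real (card U) / d" by simp
  finally show ?thesis .
qed

definition C :: "nat \<Rightarrow> real" where "C m = 2 + (real m + 1) * real (card U) / d"

lemma C_pos: "C m > 0" unfolding C_def using dpos by (simp add: add_pos_nonneg)

lemma C_mono: "C m \<le> C (Suc m)" unfolding C_def using dpos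
  by (simp add: divide_right_mono mult_right_mono)

lemma Nv_key: "x \<in> V \<Longrightarrow> Nv m x \<le> (1 - Lz m x) * C m"
proof (induction m arbitrary: x)
  case 0
  show ?case
  proof (cases "x \<in> U")
    case True then show ?thesis using Nv_bound[OF 0, of 0] by (simp add: C_def)
  next
    case False then show ?thesis by (simp add: Nv_def g0)
  qed
next
  case (Suc m)
  show ?case
  proof (cases "x \<in> U")
    case True then show ?thesis using Nv_bound[OF Suc.prems, of "Suc m"] by (simp add: C_def)
  next
    case False
    have "Nv (Suc m) x = (\<Sum>y\<in>V. lazy_P V E x y * Nv m y)" using Nv_rec[OF Suc.prems] False by simp
    also have "\<dots> \<le> (\<Sum>y\<in>V. lazy_P V E x y * ((1 - Lz m y) * C m))"
      by (rule sum_mono, rule mult_left_mono) (use Suc.IH P_nonneg in auto)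
    also have "\<dots> = ((\<Sum>y\<in>V. lazy_P V E x y) - (\<Sum>y\<in>V. lazy_P V E x y * Lz m y)) * C m"
      unfolding sum_subtractf[symmetric] sum_distrib_right by (rule sum.cong) (simp_all add: algebra_simps)
    also have "\<dots> = (1 - Lz (Suc m) x) * C m" using P_sum[OF Suc.prems] False by simp
    also have "\<dots> \<le> (1 - Lz (Suc m) x) * C (Suc m)"
      using Lz_bounds[OF Suc.prems, of "Suc m"] C_mono by (intro mult_left_mono) auto
    finally show ?thesis .
  qed
qed

lemma W_le: "(\<Sum>i\<le>s. g (s + i) x) \<le> Nv (2 * s) x"
proof -
  have "(\<Sum>i\<le>s. g (s + i) x) = (\<Sum>j\<in>(\<lambda>i. s + i) ` {..s}. g j x)"
    by (subst sum.reindex) (auto simp: inj_on_def)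
  also have "\<dots> \<le> (\<Sum>j\<le>2*s. g j x)"
    by (rule sum_mono2) (auto simp: g_nonneg)
  finally show ?thesis unfolding Nv_def .
qed

lemma main:
  assumes v: "v \<in> V" and tv: "tv_dist V (lazy_pt V E t0 v) (stat_dist V E) \<le> \<eta>" and eta: "\<eta> \<ge> 0"
  shows "1 - Lz (t0 + 2 * s) v \<ge>
    ((real s + 1) * (\<Sum>u\<in>U. stat_dist V E u) - \<eta> * (2 * (1/2)^s + (real s + 1) * real (card U) / d)) / C (2 * s)"
proof -
  define \<mu> where "\<mu> = lazy_pt V E t0 v"
  have Vne: "V \<noteq> {}" using v by auto
  have mu1: "sum \<mu> V = 1" unfolding \<mu>_def using pt_sum[OF v] .
  have mu0: "\<And>x. \<mu> x \<ge> 0" unfolding \<mu>_def by (rule pt_nonneg)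
  let ?K = "2 * s"
  let ?W = "\<lambda>x. (\<Sum>i\<le>s. g (s + i) x)"
  have a: "1 - Lz (t0 + ?K) v \<ge> (\<Sum>x\<in>V. \<mu> x * (1 - Lz ?K x))"
    using Lz_shift[OF v, of t0 ?K] mu1 unfolding \<mu>_def
    by (simp add: right_diff_distrib sum_subtractf)
  have b: "(\<Sum>x\<in>V. \<mu> x * (1 - Lz ?K x)) \<ge> (\<Sum>x\<in>V. \<mu> x * ?W x) / C ?K"
  proof -
    have "(\<Sum>x\<in>V. \<mu> x * ?W x) / C ?K = (\<Sum>x\<in>V. \<mu> x * (?W x / C ?K))"
      by (subst sum_divide_distrib) (simp only: times_divide_eq_right)
    also have "\<dots> \<le> (\<Sum>x\<in>V. \<mu> x * (1 - Lz ?K x))"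
    proof (rule sum_mono, rule mult_left_mono)
      fix x assume x: "x \<in> V"
      have "?W x \<le> (1 - Lz ?K x) * C ?K" using W_le Nv_key[OF x] by (rule order_trans)
      then show "?W x / C ?K \<le> 1 - Lz ?K x" using C_pos[of ?K] by (simp add: divide_le_eq)
    qed (rule mu0)
    finally show ?thesis .
  qed
  have c: "(\<Sum>x\<in>V. \<mu> x * g j x) \<ge> (\<Sum>u\<in>U. stat_dist V E u) - \<eta> * ((1/2)^j + real (card U) / d)" for j
  proof -
    have pg: "(\<Sum>x\<in>V. stat_dist V E x * g j x) = (\<Sum>u\<in>U. stat_dist V E u)"
    proof -
      have "(\<Sum>x\<in>V. stat_dist V E x * g j x) = (\<Sum>x\<in>V. \<Sum>u\<in>U. stat_dist V E x * lazy_pt V E j x u)"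
        by (simp add: g_def sum_distrib_left)
      also have "\<dots> = (\<Sum>u\<in>U. \<Sum>x\<in>V. stat_dist V E x * lazy_pt V E j x u)" by (rule sum.swap)
      also have "\<dots> = (\<Sum>u\<in>U. stat_dist V E u)" by (rule sum.cong) (use UV pi_pt in auto)
      finally show ?thesis .
    qed
    have "(\<Sum>x\<in>V. stat_dist V E x * g j x) - (\<Sum>x\<in>V. \<mu> x * g j x)
        \<le> ((1/2)^j + real (card U) / d) * tv_dist V \<mu> (stat_dist V E)"
      by (rule tv_lemma[OF finV mu1 pi_sum[OF Vne]]) (use g_nonneg g_bound in auto)
    also have "\<dots> \<le> ((1/2)^j + real (card U) / d) * \<eta>"
      using tv dpos unfolding \<mu>_def by (intro mult_left_mono) auto
    finally show ?thesis using pg by (simp add: algebra_simps)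
  qed
  have sw: "(\<Sum>x\<in>V. \<mu> x * ?W x) = (\<Sum>i\<le>s. (\<Sum>x\<in>V. \<mu> x * g (s + i) x))"
    by (simp add: sum_distrib_left sum.swap[of _ V])
  have "(\<Sum>i\<le>s. (\<Sum>x\<in>V. \<mu> x * g (s + i) x)) \<ge>
     (\<Sum>i\<le>s. (\<Sum>u\<in>U. stat_dist V E u) - \<eta> * ((1/2)^(s+i) + real (card U) / d))"
    by (rule sum_mono) (rule c)
  moreover have "(\<Sum>i\<le>s. (\<Sum>u\<in>U. stat_dist V E u) - \<eta> * ((1/2)^(s+i) + real (card U) / d))
     = (real s + 1) * (\<Sum>u\<in>U. stat_dist V E u) - \<eta> * ((1/2)^s * (\<Sum>i\<le>s. (1/2)^i) + (real s + 1) * real (card U) / d)"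
  proof -
    have e: "(\<Sum>i\<le>s. (1/2::real)^(s+i)) = (1/2)^s * (\<Sum>i\<le>s. (1/2)^i)"
      by (simp add: power_add sum_distrib_left)
    have "(\<Sum>i\<le>s. (\<Sum>u\<in>U. stat_dist V E u) - \<eta> * ((1/2)^(s+i) + real (card U) / d))
       = (\<Sum>i\<le>s. (\<Sum>u\<in>U. stat_dist V E u)) - \<eta> * (\<Sum>i\<le>s. ((1/2)^(s+i) + real (card U) / d))"
      by (simp only: sum_subtractf sum_distrib_left)
    also have "(\<Sum>i\<le>s. ((1/2::real)^(s+i) + real (card U) / d)) = (\<Sum>i\<le>s. (1/2::real)^(s+i)) + (real s + 1) * (real (card U) / d)"
      by (simp add: sum.distrib)
    finally show ?thesis using e by simp
  qed
  moreover have "(1/2::real)^s * (\<Sum>i\<le>s. (1/2)^i) \<le> 2 * (1/2)^s"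
    by (simp add: geom_sum)
  ultimately have d: "(\<Sum>x\<in>V. \<mu> x * ?W x) \<ge> (real s + 1) * (\<Sum>u\<in>U. stat_dist V E u) - \<eta> * (2 * (1/2)^s + (real s + 1) * real (card U) / d)"
    using sw eta by (smt (verit, best) mult_left_mono)
  have "((real s + 1) * (\<Sum>u\<in>U. stat_dist V E u) - \<eta> * (2 * (1/2)^s + (real s + 1) * real (card U) / d)) / C ?K
     \<le> (\<Sum>x\<in>V. \<mu> x * ?W x) / C ?K"
    using d C_pos[of ?K] by (simp add: divide_right_mono)
  then show ?thesis using a b by linarith
qed

end


lemma final_arith:
  fixes \<epsilon> \<delta> b X Cc :: real
  assumes e0: "\<epsilon> > 0" and d0: "\<delta> > 0" and e1: "\<epsilon> \<le> \<delta>/8" and e2: "\<epsilon> \<le> \<delta>^2/8"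
    and hb: "b \<ge> \<epsilon>" and hX: "X \<ge> b*\<delta> - \<epsilon>*\<epsilon> - \<epsilon>*b/(2*\<delta>)"
    and hC: "Cc \<le> 2 + 2*b/\<delta>" and Cp: "Cc > 0"
  shows "X / Cc \<ge> \<epsilon> * \<delta> / 4"
proof -
  have b0: "b > 0" using hb e0 by linarith
  have h1: "\<epsilon>*b/(2*\<delta>) \<le> b*\<delta>/16"
  proof -
    have "\<epsilon>*b*16 \<le> (\<delta>^2/8)*b*16" using e2 b0 by (intro mult_right_mono) auto
    then show ?thesis using d0 by (simp add: field_simps power2_eq_square)
  qed
  have h2: "\<epsilon>*b/2 \<le> b*\<delta>/16" using e1 b0 by (simp add: field_simps)
  have h3: "b*\<delta> \<ge> \<epsilon>*\<delta>" using hb d0 by (simp add: mult_right_mono)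
  have "\<epsilon>*\<epsilon> \<le> \<epsilon>*(\<delta>/8)" using e1 e0 by (simp add: mult_left_mono)
  then have h4: "\<epsilon>*\<epsilon> \<le> \<epsilon>*\<delta>/8" by simp
  have "\<epsilon>*\<delta>/4 * Cc \<le> \<epsilon>*\<delta>/4 * (2 + 2*b/\<delta>)" using hC e0 d0 by (intro mult_left_mono) auto
  also have "\<dots> = \<epsilon>*\<delta>/2 + \<epsilon>*b/2" using d0 by (simp add: field_simps)
  also have "\<dots> \<le> X" using hX h1 h2 h3 h4 mult_pos_pos[OF e0 d0] by linarith
  finally show ?thesis using Cp by (simp add: le_divide_eq)
qed

theorem claim3p3:
  shows "\<forall>\<delta>::real. \<delta> > 0 \<longrightarrow> (\<exists>c::real. c > 0 \<and>
    (\<forall>\<epsilon>::real. \<forall>(V::nat set) E U v.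
       0 < \<epsilon> \<and> \<epsilon> < c \<and> simple_graph V E \<and>
       real (card V) \<ge> 1 / \<epsilon>^2 \<and>
       (\<forall>u\<in>V. real (deg V E u) \<ge> \<delta> * real (card V)) \<and>
       U \<subseteq> V \<and> real (card U) \<ge> \<epsilon> * sqrt (real (card V)) \<and>
       v \<in> V \<and>
       (\<forall>x\<in>V. \<exists>t. tv_dist V (lazy_pt V E t x) (stat_dist V E) < \<epsilon> / 2)
       \<longrightarrow> srw_avoid V E U
             (2 * (t_mix V E (\<epsilon> / 2) + nat \<lfloor>sqrt (real (card V))\<rfloor>)) v
           \<le> 1 - \<epsilon> * \<delta> / 4))"
proof (intro allI impI)
  fix \<delta> :: real assume d0: "\<delta> > 0"
  show "\<exists>c::real. c > 0 \<and>
    (\<forall>\<epsilon>::real. \<forall>(V::nat set) E U v.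
       0 < \<epsilon> \<and> \<epsilon> < c \<and> simple_graph V E \<and>
       real (card V) \<ge> 1 / \<epsilon>^2 \<and>
       (\<forall>u\<in>V. real (deg V E u) \<ge> \<delta> * real (card V)) \<and>
       U \<subseteq> V \<and> real (card U) \<ge> \<epsilon> * sqrt (real (card V)) \<and>
       v \<in> V \<and>
       (\<forall>x\<in>V. \<exists>t. tv_dist V (lazy_pt V E t x) (stat_dist V E) < \<epsilon> / 2)
       \<longrightarrow> srw_avoid V E U
             (2 * (t_mix V E (\<epsilon> / 2) + nat \<lfloor>sqrt (real (card V))\<rfloor>)) v
           \<le> 1 - \<epsilon> * \<delta> / 4)"
  proof (intro exI[of _ "min (\<delta>/8) (\<delta>^2/8)"] conjI allI impI)
    show "min (\<delta>/8) (\<delta>^2/8) > 0" using d0 by simp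
    fix \<epsilon> :: real and V :: "nat set" and E U v
    assume H: "0 < \<epsilon> \<and> \<epsilon> < min (\<delta>/8) (\<delta>^2/8) \<and> simple_graph V E \<and>
       real (card V) \<ge> 1 / \<epsilon>^2 \<and>
       (\<forall>u\<in>V. real (deg V E u) \<ge> \<delta> * real (card V)) \<and>
       U \<subseteq> V \<and> real (card U) \<ge> \<epsilon> * sqrt (real (card V)) \<and>
       v \<in> V \<and>
       (\<forall>x\<in>V. \<exists>t. tv_dist V (lazy_pt V E t x) (stat_dist V E) < \<epsilon> / 2)"
    then have e0: "0 < \<epsilon>" and e1: "\<epsilon> \<le> \<delta>/8" and e2: "\<epsilon> \<le> \<delta>^2/8" and sg: "simple_graph V E"
      and hn: "real (card V) \<ge> 1 / \<epsilon>^2" and hdeg: "\<forall>u\<in>V. real (deg V E u) \<ge> \<delta> * real (card V)"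
      and UV: "U \<subseteq> V" and hU: "real (card U) \<ge> \<epsilon> * sqrt (real (card V))" and v: "v \<in> V"
      and hmix: "\<forall>x\<in>V. \<exists>t. tv_dist V (lazy_pt V E t x) (stat_dist V E) < \<epsilon> / 2"
      by auto
    define nn where "nn = real (card V)"
    define a where "a = real (card U)"
    define s where "s = nat \<lfloor>sqrt nn\<rfloor>"
    define d where "d = \<delta> * nn"
    have finV: "finite V" using sg by (simp add: simple_graph_def)
    have "card V > 0" using finV v card_gt_0_iff by blast
    then have n1: "nn \<ge> 1" unfolding nn_def by simp
    have dpos: "d > 0" unfolding d_def using d0 n1 by simp
    interpret rw V E U d
      by unfold_locales (use sg UV dpos hdeg in \<open>auto simp: d_def nn_def\<close>)
    define tv where "tv = (LEAST t. tv_dist V (lazy_pt V E t v) (stat_dist V E) < \<epsilon> / 2)"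
    have tvp: "tv_dist V (lazy_pt V E tv v) (stat_dist V E) < \<epsilon> / 2"
      unfolding tv_def using hmix v by (meson LeastI_ex)
    have tvle: "tv \<le> t_mix V E (\<epsilon> / 2)"
      unfolding t_mix_def tv_def using finV v by (intro Max_ge) auto
    have s_eq: "nat \<lfloor>sqrt (real (card V))\<rfloor> = s" unfolding s_def nn_def ..
    have M: "1 - Lz (tv + 2 * s) v \<ge>
      ((real s + 1) * (\<Sum>u\<in>U. stat_dist V E u) - (\<epsilon>/2) * (2 * (1/2)^s + (real s + 1) * a / d)) / C (2 * s)"
      using main[OF v, of tv "\<epsilon>/2" s] tvp e0 unfolding a_def by simp
    have A: "srw_avoid V E U (2 * (t_mix V E (\<epsilon> / 2) + s)) v \<le> Lz (tv + 2 * s) v"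
      using A_mono[OF v, of "tv + 2 * s" "2 * (t_mix V E (\<epsilon> / 2) + s)"] tvle A_le_Lz[OF v, of "tv + 2 * s"]
      by simp
    define \<sigma> where "\<sigma> = real s + 1"
    have sq0: "sqrt nn \<ge> 0" using n1 by simp
    have sqsq: "sqrt nn * sqrt nn = nn" using n1 by simp
    have hsq: "sqrt nn \<ge> 1 / \<epsilon>"
    proof -
      have "sqrt (1 / \<epsilon>^2) \<le> sqrt nn" using hn unfolding nn_def by (simp only: real_sqrt_le_iff)
      then show ?thesis using e0 by (simp add: real_sqrt_divide)
    qed
    have hsig: "\<sigma> \<ge> sqrt nn"
    proof -
      have "real s = of_int \<lfloor>sqrt nn\<rfloor>" unfolding s_def using n1 by simp
      then show ?thesis unfolding \<sigma>_def by linarith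
    qed
    have sqp: "sqrt nn > 0" using n1 by simp
    have hb: "\<sigma> * a / nn \<ge> \<epsilon>"
    proof -
      have "\<sigma> * a \<ge> sqrt nn * (\<epsilon> * sqrt nn)"
        using hsig hU sq0 e0 unfolding a_def
        by (intro mult_mono) (auto simp: \<sigma>_def nn_def)
      also have "sqrt nn * (\<epsilon> * sqrt nn) = \<epsilon> * nn" using sqsq by (simp add: algebra_simps)
      finally show ?thesis using n1 by (simp add: le_divide_eq)
    qed
    have hpow: "(1/2::real)^s \<le> \<epsilon>"
    proof -
      have "(1/2::real)^s = 1 / 2^s" by (simp add: power_one_over)
      also have "\<dots> \<le> 1 / \<sigma>" unfolding \<sigma>_def using pow2_ge[of s] by (intro divide_left_mono) auto
      also have "\<dots> \<le> 1 / sqrt nn"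
      proof -
        have sigp: "\<sigma> > 0" using hsig sqp by linarith
        show ?thesis using hsig sqp mult_pos_pos[OF sigp sqp] by (intro divide_left_mono) auto
      qed
      also have "\<dots> \<le> \<epsilon>" using hsq e0 sqp by (simp add: divide_le_eq mult.commute pos_divide_le_eq)
      finally show ?thesis .
    qed
    have hpiU: "(\<Sum>u\<in>U. stat_dist V E u) \<ge> a * \<delta> / nn"
    proof -
      define S where "S = real (\<Sum>u\<in>V. deg V E u)"
      have Sp: "S > 0" unfolding S_def using S_pos v by auto
      have SV: "S \<le> nn * nn"
      proof -
        have "S = (\<Sum>u\<in>V. real (deg V E u))" unfolding S_def by simp
        also have "\<dots> \<le> (\<Sum>u\<in>V. nn)"
        proof (rule sum_mono)
          fix u assume "u \<in> V"
          have "deg V E u \<le> card V" unfolding deg_def using finV by (intro card_mono) auto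
          then show "real (deg V E u) \<le> nn" unfolding nn_def by simp
        qed
        also have "\<dots> = nn * nn" unfolding nn_def by simp
        finally show ?thesis .
      qed
      have SU: "(\<Sum>u\<in>U. real (deg V E u)) \<ge> a * (\<delta> * nn)"
      proof -
        have "(\<Sum>u\<in>U. real (deg V E u)) \<ge> (\<Sum>u\<in>U. \<delta> * nn)"
          by (rule sum_mono) (use hdeg UV in \<open>auto simp: nn_def\<close>)
        then show ?thesis unfolding a_def by simp
      qed
      have "(\<Sum>u\<in>U. stat_dist V E u) = (\<Sum>u\<in>U. real (deg V E u)) / S"
        unfolding stat_dist_def S_def by (simp add: sum_divide_distrib)
      also have "\<dots> \<ge> (a * (\<delta> * nn)) / (nn * nn)"
        using SU SV Sp d0 n1 unfolding a_def by (intro frac_le) (auto intro: sum_nonneg)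
      finally show ?thesis using n1 by (simp add: field_simps)
    qed
    have hX: "(real s + 1) * (\<Sum>u\<in>U. stat_dist V E u) - (\<epsilon>/2) * (2 * (1/2)^s + (real s + 1) * a / d)
       \<ge> (\<sigma> * a / nn) * \<delta> - \<epsilon> * \<epsilon> - \<epsilon> * (\<sigma> * a / nn) / (2 * \<delta>)"
    proof -
      have "\<sigma> * (\<Sum>u\<in>U. stat_dist V E u) \<ge> \<sigma> * (a * \<delta> / nn)"
        using hpiU unfolding \<sigma>_def by (intro mult_left_mono) auto
      moreover have "\<epsilon> * (1/2)^s \<le> \<epsilon> * \<epsilon>" using hpow e0 by (intro mult_left_mono) auto
      moreover have "(\<epsilon>/2) * (\<sigma> * a / d) = \<epsilon> * (\<sigma> * a / nn) / (2 * \<delta>)"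
        unfolding d_def using d0 n1 by (simp add: field_simps)
      moreover have "\<sigma> * (a * \<delta> / nn) = (\<sigma> * a / nn) * \<delta>" by simp
      ultimately show ?thesis unfolding \<sigma>_def by (simp add: algebra_simps)
    qed
    have hC: "C (2 * s) \<le> 2 + 2 * (\<sigma> * a / nn) / \<delta>"
    proof -
      have a0: "a \<ge> 0" unfolding a_def by simp
      have "(real (2 * s) + 1) * a / d \<le> (2 * \<sigma>) * a / d"
        unfolding \<sigma>_def using a0 dpos by (intro divide_right_mono mult_right_mono) auto
      also have "\<dots> = 2 * (\<sigma> * a / nn) / \<delta>" unfolding d_def using d0 n1 by (simp add: field_simps)
      finally show ?thesis unfolding C_def a_def by simp
    qed
    have fin: "((real s + 1) * (\<Sum>u\<in>U. stat_dist V E u) - (\<epsilon>/2) * (2 * (1/2)^s + (real s + 1) * a / d)) / C (2 * s)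
       \<ge> \<epsilon> * \<delta> / 4"
      by (rule final_arith[OF e0 d0 e1 e2 hb hX hC C_pos])
    show "srw_avoid V E U (2 * (t_mix V E (\<epsilon> / 2) + nat \<lfloor>sqrt (real (card V))\<rfloor>)) v \<le> 1 - \<epsilon> * \<delta> / 4"
      unfolding s_eq using A M fin by linarith
  qed
qed


end
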